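(* Let $N\ge 1$. The set of all positive integers $n$ whose Chung–Graham decomposition has coefficient $c_N=0$ (i.e. contains neither $F_{2N}$ nor $2F_{2N}$) is $$B_{2N}=\{1,2,\dots,F_{2N}-1\}\cup\bigcup_{k=N+1}^{\infty}\left\{\,j+F_{2k},\ \ j+(n+2)F_{2k}+\left\lfloor\frac{n+1}{\phi}\right\rfloor F_{2k-1}\ :\ 0\le j\le F_{2N}-1,\ n\ge 0\right\},$$ where $\phi=(1+\sqrt5)/2$.
   Context: Fibonacci numbers: $F_1=F_2=1$, $F_{n+1}=F_n+F_{n-1}$ for $n\ge2$. Chung–Graham decomposition: every positive integer $n$ has a unique representation $n=\sum_{i\ge1}c_iF_{2i}$ with $c_i\in\{0,1,2\}$, only finitely many nonzero, such that whenever $c_i=c_j=2$ with $i<j$ there is $k$ with $i<k<j$ and $c_k=0$ (call this the Chung–Graham condition). $\lfloor\cdot\rfloor$ is the floor function. *)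

theory Defs
  imports Complex_Main "HOL-Number_Theory.Fib"
begin

text \<open>Fibonacci numbers: library fib with fib 1 = fib 2 = 1.
  A coefficient sequence c (indexed from 1; c 0 = 0 by convention) is a
  Chung-Graham decomposition of n.\<close>

definition CG_rep :: "nat \<Rightarrow> (nat \<Rightarrow> nat) \<Rightarrow> bool" where
  "CG_rep n c \<longleftrightarrow>
     c 0 = 0 \<and> (\<forall>i. c i \<le> 2) \<and> finite {i. c i \<noteq> 0} \<and>
     n = (\<Sum>i\<in>{i. c i \<noteq> 0}. c i * fib (2 * i)) \<and>
     (\<forall>i j. i < j \<longrightarrow> c i = 2 \<longrightarrow> c j = 2 \<longrightarrow> (\<exists>k. i < k \<and> k < j \<and> c k = 0))"

definition CG_decomp :: "nat \<Rightarrow> (nat \<Rightarrow> nat)" where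
  "CG_decomp n = (THE c. CG_rep n c)"

definition phi :: real where
  "phi = (1 + sqrt 5) / 2"

end

theory Submission
  imports Defs
begin

definition cgv :: "(nat \<Rightarrow> nat) \<Rightarrow> bool" where
  "cgv c \<longleftrightarrow> (\<forall>i. c i \<le> 2) \<and>
     (\<forall>i j. i < j \<longrightarrow> c i = 2 \<longrightarrow> c j = 2 \<longrightarrow> (\<exists>k. i < k \<and> k < j \<and> c k = 0))"

definition topc :: "(nat \<Rightarrow> nat) \<Rightarrow> nat \<Rightarrow> bool" where
  "topc c K \<longleftrightarrow> (\<forall>i<K. c i = 2 \<longrightarrow> (\<exists>j. i < j \<and> j < K \<and> c j = 0))"

definition ev :: "(nat \<Rightarrow> nat) \<Rightarrow> nat \<Rightarrow> nat" where
  "ev c K = (\<Sum>i<K. c i * fib (2*i))"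

lemma fib_eq2: "fib (Suc (Suc n)) = fib (Suc n) + fib n" by simp

lemma fib_even_step: "k \<ge> 1 \<Longrightarrow> fib (2*k+2) = 2 * fib (2*k) + fib (2*k-1)"
proof -
  assume "k \<ge> 1"
  then obtain t where t: "2*k = Suc t" by (cases k) auto
  have "fib (2*k+2) = fib (Suc (Suc (Suc t)))" using t by simp
  also have "\<dots> = 2 * fib (Suc t) + fib t" by simp
  finally show ?thesis using t by simp
qed

lemma fib_odd_step: "fib (2*k+1) = fib (2*k) + fib (2*k-1) \<or> k = 0"
proof (cases k)
  case (Suc m) then have "2*k = Suc (Suc (2*m))" by simp
  then show ?thesis by (simp add: Suc)
qed simp

lemma upd1_cgv:
  assumes "cgv c" "\<forall>i\<ge>k. c i = 0" shows "cgv (c(k:=1))"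
  unfolding cgv_def
proof (intro conjI allI impI)
  fix i show "(c(k:=1)) i \<le> 2" using assms(1) unfolding cgv_def by simp
next
  fix i j assume ij: "i < j" and a: "(c(k:=1)) i = 2" and b: "(c(k:=1)) j = 2"
  have "j \<noteq> k" using b by auto
  moreover have "i \<noteq> k" using a by auto
  ultimately have "c i = 2" "c j = 2" using a b by auto
  then obtain w where w: "i < w" "w < j" "c w = 0" using assms(1) ij unfolding cgv_def by blast
  have "j < k" using \<open>c j = 2\<close> assms(2) by (metis not_less numeral_2_eq_2 nat.simps(3))
  then have "w \<noteq> k" using w by simp
  then show "\<exists>w. i < w \<and> w < j \<and> (c(k:=1)) w = 0" using w by auto
qed

lemma upd2_cgv:
  assumes "cgv c" "\<forall>i\<ge>k. c i = 0" "topc c k" shows "cgv (c(k:=2))"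
  unfolding cgv_def
proof (intro conjI allI impI)
  fix i show "(c(k:=2)) i \<le> 2" using assms(1) unfolding cgv_def by simp
next
  fix i j assume ij: "i < j" and a: "(c(k:=2)) i = 2" and b: "(c(k:=2)) j = 2"
  show "\<exists>w. i < w \<and> w < j \<and> (c(k:=2)) w = 0"
  proof (cases "j = k")
    case True
    then have "i \<noteq> k" "c i = 2" using a ij by auto
    then obtain w where "i < w" "w < k" "c w = 0" using assms(3) ij True unfolding topc_def by blast
    then show ?thesis using True by auto
  next
    case False
    then have cj: "c j = 2" using b by auto
    have "j < k" using cj assms(2) by (metis not_less numeral_2_eq_2 nat.simps(3))
    then have "i \<noteq> k" "c i = 2" using a ij by auto
    then obtain w where w: "i < w" "w < j" "c w = 0" using assms(1) ij cj unfolding cgv_def by blast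
    then have "w \<noteq> k" using \<open>j < k\<close> by simp
    then show ?thesis using w by (intro exI[of _ w]) simp
  qed
qed

lemma topc_zero: assumes "\<forall>i\<ge>k. c i = 0" shows "topc c (Suc k)"
  unfolding topc_def
proof (intro allI impI)
  fix i assume "i < Suc k" "c i = 2"
  then have "i < k" using assms by (metis less_Suc_eq zero_neq_numeral order_refl)
  then show "\<exists>j. i < j \<and> j < Suc k \<and> c j = 0" using assms by (intro exI[of _ k]) simp
qed

lemma topc_upd1: assumes "topc c k" shows "topc (c(k:=1)) (Suc k)"
  unfolding topc_def
proof (intro allI impI)
  fix i assume "i < Suc k" "(c(k:=1)) i = 2"
  then have "i < k" "c i = 2" by (auto split: if_splits simp: less_Suc_eq)
  then obtain j where "i < j" "j < k" "c j = 0" using assms unfolding topc_def by blast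
  then show "\<exists>j. i < j \<and> j < Suc k \<and> (c(k:=1)) j = 0" by auto
qed

lemma ev_upd: "\<forall>i\<ge>k. c i = 0 \<Longrightarrow> ev (c(k:=x)) (Suc k) = ev c k + x * fib (2*k)"
  unfolding ev_def by simp

lemma ev_extend: "\<forall>i\<ge>K1. c i = 0 \<Longrightarrow> K1 \<le> K2 \<Longrightarrow> ev c K2 = ev c K1"
  unfolding ev_def
  by (rule sum.mono_neutral_right) auto

lemma cgv_zero: "cgv (\<lambda>_. 0)" unfolding cgv_def by simp

lemma ev_zero: "ev (\<lambda>_. 0) K = 0" unfolding ev_def by simp

lemma cg_exists_aux:
  assumes "k \<ge> 1"
  shows "\<forall>n. (n < fib (2*k) \<longrightarrow> (\<exists>c. cgv c \<and> c 0 = 0 \<and> (\<forall>i\<ge>k. c i = 0) \<and> ev c k = n)) \<and>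
             (n < fib (2*k-1) \<longrightarrow> (\<exists>c. cgv c \<and> c 0 = 0 \<and> (\<forall>i\<ge>k. c i = 0) \<and> ev c k = n \<and> topc c k))"
  using assms
proof (induction k rule: nat_induct_at_least)
  case base
  have "fib 2 = 1" by (simp add: numeral_2_eq_2)
  then show ?case
    by (auto intro!: exI[of _ "\<lambda>_. 0"] simp: cgv_zero ev_zero topc_def)
next
  case (Suc k)
  have k1: "k \<ge> 1" by fact
  have F2: "fib (2 * Suc k) = 2 * fib (2*k) + fib (2*k-1)" using fib_even_step[OF k1] by simp
  have F1: "fib (2 * Suc k - 1) = fib (2*k) + fib (2*k-1)" using fib_odd_step[of k] k1 by auto
  show ?case
  proof (intro allI conjI impI)
    fix n assume n: "n < fib (2 * Suc k)"
    show "\<exists>c. cgv c \<and> c 0 = 0 \<and> (\<forall>i\<ge>Suc k. c i = 0) \<and> ev c (Suc k) = n"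
    proof (cases "n < fib (2*k)")
      case True
      then obtain c where c: "cgv c" "c 0 = 0" "\<forall>i\<ge>k. c i = 0" "ev c k = n" using Suc.IH by blast
      then show ?thesis using ev_extend[OF c(3), of "Suc k"] by (intro exI[of _ c]) auto
    next
      case False
      show ?thesis
      proof (cases "n < 2 * fib (2*k)")
        case True
        then have "n - fib (2*k) < fib (2*k)" using False by simp
        then obtain c where c: "cgv c" "c 0 = 0" "\<forall>i\<ge>k. c i = 0" "ev c k = n - fib (2*k)" using Suc.IH by blast
        show ?thesis
          apply (intro exI[of _ "c(k:=1)"])
          using c upd1_cgv[OF c(1) c(3)] ev_upd[OF c(3), of 1] k1 False by auto
      next
        case False2: False
        then have "n - 2 * fib (2*k) < fib (2*k-1)" using n F2 by simp
        then obtain c where c: "cgv c" "c 0 = 0" "\<forall>i\<ge>k. c i = 0" "ev c k = n - 2 * fib (2*k)" "topc c k"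
          using Suc.IH by blast
        show ?thesis
          apply (intro exI[of _ "c(k:=2)"])
          using c upd2_cgv[OF c(1) c(3) c(5)] ev_upd[OF c(3), of 2] k1 False2 by auto
      qed
    qed
  next
    fix n assume n: "n < fib (2 * Suc k - 1)"
    show "\<exists>c. cgv c \<and> c 0 = 0 \<and> (\<forall>i\<ge>Suc k. c i = 0) \<and> ev c (Suc k) = n \<and> topc c (Suc k)"
    proof (cases "n < fib (2*k)")
      case True
      then obtain c where c: "cgv c" "c 0 = 0" "\<forall>i\<ge>k. c i = 0" "ev c k = n" using Suc.IH by blast
      then show ?thesis using ev_extend[OF c(3), of "Suc k"] topc_zero[OF c(3)] by (intro exI[of _ c]) auto
    next
      case False
      then have "n - fib (2*k) < fib (2*k-1)" using n F1 by simp
      then obtain c where c: "cgv c" "c 0 = 0" "\<forall>i\<ge>k. c i = 0" "ev c k = n - fib (2*k)" "topc c k"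
        using Suc.IH by blast
      show ?thesis
        apply (intro exI[of _ "c(k:=1)"])
        using c upd1_cgv[OF c(1) c(3)] ev_upd[OF c(3), of 1] k1 False topc_upd1[OF c(5)] by auto
    qed
  qed
qed

lemma cgv_restrict: assumes "cgv c" shows "cgv (\<lambda>i. if P i then c i else 0)"
  unfolding cgv_def
proof (intro conjI allI impI)
  fix i show "(if P i then c i else 0) \<le> 2" using assms unfolding cgv_def by simp
next
  fix i j assume ij: "i < j" and a: "(if P i then c i else 0) = 2" and b: "(if P j then c j else 0) = 2"
  then have "c i = 2" "c j = 2" by (auto split: if_splits)
  then obtain w where "i < w" "w < j" "c w = 0" using assms ij unfolding cgv_def by blast
  then show "\<exists>w. i < w \<and> w < j \<and> (if P w then c w else 0) = 0" by auto
qed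

lemma cgv_upd0: "cgv c \<Longrightarrow> cgv (c(k:=0))"
proof -
  assume "cgv c"
  have "c(k:=0) = (\<lambda>i. if i \<noteq> k then c i else 0)" by auto
  then show ?thesis using cgv_restrict[OF \<open>cgv c\<close>] by simp
qed

lemma cg_bound_aux:
  assumes "k \<ge> 1"
  shows "\<forall>c. cgv c \<longrightarrow> (\<forall>i\<ge>k. c i = 0) \<longrightarrow> ev c k < fib (2*k) \<and> (topc c k \<longrightarrow> ev c k < fib (2*k-1))"
  using assms
proof (induction k rule: nat_induct_at_least)
  case base
  have "fib 2 = 1" by (simp add: numeral_2_eq_2)
  then show ?case by (simp add: ev_def)
next
  case (Suc k)
  have k1: "k \<ge> 1" by fact
  have F2: "fib (2 * Suc k) = 2 * fib (2*k) + fib (2*k-1)" using fib_even_step[OF k1] by simp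
  have F1: "fib (2 * Suc k - 1) = fib (2*k) + fib (2*k-1)" using fib_odd_step[of k] k1 by auto
  show ?case
  proof (intro allI impI)
    fix c assume cv: "cgv c" and sp: "\<forall>i\<ge>Suc k. c i = 0"
    define c0 where "c0 = c(k:=0)"
    have c0v: "cgv c0" unfolding c0_def using cgv_upd0[OF cv] .
    have c0s: "\<forall>i\<ge>k. c0 i = 0" using sp unfolding c0_def by (simp add: Suc_le_eq)
    have "c0(k := c k) = c" unfolding c0_def by auto
    then have evc: "ev c (Suc k) = ev c0 k + c k * fib (2*k)" using ev_upd[OF c0s, of "c k"] by simp
    have IH: "ev c0 k < fib (2*k)" "topc c0 k \<Longrightarrow> ev c0 k < fib (2*k-1)" using Suc.IH c0v c0s by auto
    have ck: "c k \<le> 2" using cv unfolding cgv_def by simp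
    have fibm: "fib (2*k) \<le> fib (2*k+1)" by (simp add: fib_mono)
    have fibm2: "fib (2*k-1) \<le> fib (2*k)" by (simp add: fib_mono)
    consider "c k = 0" | "c k = 1" | "c k = 2" using ck by linarith
    then show "ev c (Suc k) < fib (2 * Suc k) \<and> (topc c (Suc k) \<longrightarrow> ev c (Suc k) < fib (2 * Suc k - 1))"
    proof cases
      case 1
      then show ?thesis using evc IH F1 F2 by simp
    next
      case 2
      have "topc c (Suc k) \<Longrightarrow> topc c0 k"
        unfolding topc_def
      proof (intro allI impI)
        fix i assume tc: "\<forall>i<Suc k. c i = 2 \<longrightarrow> (\<exists>j>i. j < Suc k \<and> c j = 0)" and i: "i < k" "c0 i = 2"
        then have "c i = 2" unfolding c0_def by (auto split: if_splits)
        then have "i < Suc k" using i by simp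
        then obtain j where j: "i < j" "j < Suc k" "c j = 0" using tc \<open>c i = 2\<close> by blast
        then have "j \<noteq> k" using 2 by auto
        then show "\<exists>j>i. j < k \<and> c0 j = 0" using j unfolding c0_def by (intro exI[of _ j]) auto
      qed
      then show ?thesis using evc IH F1 F2 2 fibm2 by auto
    next
      case 3
      have "topc c0 k"
        unfolding topc_def
      proof (intro allI impI)
        fix i assume i: "i < k" "c0 i = 2"
        then have "c i = 2" unfolding c0_def by (auto split: if_splits)
        then obtain j where j: "i < j" "j < k" "c j = 0" using cv i 3 unfolding cgv_def by blast
        then show "\<exists>j>i. j < k \<and> c0 j = 0" unfolding c0_def by (intro exI[of _ j]) auto
      qed
      moreover have "\<not> topc c (Suc k)" unfolding topc_def using 3 by (auto intro!: exI[of _ k])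
      ultimately show ?thesis using evc IH F1 F2 3 by auto
    qed
  qed
qed

lemma cg_unique_aux:
  assumes "k \<ge> 1"
  shows "\<forall>c c'. cgv c \<longrightarrow> cgv c' \<longrightarrow> c 0 = 0 \<longrightarrow> c' 0 = 0 \<longrightarrow> (\<forall>i\<ge>k. c i = 0) \<longrightarrow> (\<forall>i\<ge>k. c' i = 0)
     \<longrightarrow> ev c k = ev c' k \<longrightarrow> c = c'"
  using assms
proof (induction k rule: nat_induct_at_least)
  case base
  show ?case
  proof (intro allI impI)
    fix c c' :: "nat \<Rightarrow> nat" assume "c 0 = 0" "c' 0 = 0" "\<forall>i\<ge>1. c i = 0" "\<forall>i\<ge>1. c' i = 0"
    then show "c = c'" by (metis le_eq_less_or_eq less_one linorder_neqE_nat ext)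
  qed
next
  case (Suc k)
  have k1: "k \<ge> 1" by fact
  show ?case
  proof (intro allI impI)
    fix c c' assume cv: "cgv c" and cv': "cgv c'" and z: "c 0 = 0" and z': "c' 0 = 0"
      and sp: "\<forall>i\<ge>Suc k. c i = 0" and sp': "\<forall>i\<ge>Suc k. c' i = 0" and eq: "ev c (Suc k) = ev c' (Suc k)"
    define c0 where "c0 = c(k:=0)"
    define c0' where "c0' = c'(k:=0)"
    have c0v: "cgv c0" unfolding c0_def using cgv_upd0[OF cv] .
    have c0s: "\<forall>i\<ge>k. c0 i = 0" using sp unfolding c0_def by (simp add: Suc_le_eq)
    have c0v': "cgv c0'" unfolding c0'_def using cgv_upd0[OF cv'] .
    have c0s': "\<forall>i\<ge>k. c0' i = 0" using sp' unfolding c0'_def by (simp add: Suc_le_eq)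
    have "c0(k := c k) = c" unfolding c0_def by auto
    then have evc: "ev c (Suc k) = ev c0 k + c k * fib (2*k)" using ev_upd[OF c0s, of "c k"] by simp
    have "c0'(k := c' k) = c'" unfolding c0'_def by auto
    then have evc': "ev c' (Suc k) = ev c0' k + c' k * fib (2*k)" using ev_upd[OF c0s', of "c' k"] by simp
    have B: "ev c0 k < fib (2*k)" "ev c0' k < fib (2*k)" using cg_bound_aux[OF k1] c0v c0s c0v' c0s' by auto
    have "c k = c' k"
    proof (rule ccontr)
      assume "c k \<noteq> c' k"
      then consider "c k < c' k" | "c' k < c k" by linarith
      then show False
      proof cases
        case 1
        then have "(c k + 1) * fib (2*k) \<le> c' k * fib (2*k)" by (intro mult_right_mono) auto
        then show False using evc evc' eq B by (simp add: algebra_simps)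
      next
        case 2
        then have "(c' k + 1) * fib (2*k) \<le> c k * fib (2*k)" by (intro mult_right_mono) auto
        then show False using evc evc' eq B by (simp add: algebra_simps)
      qed
    qed
    then have "ev c0 k = ev c0' k" using evc evc' eq by simp
    moreover have "c0 0 = 0" "c0' 0 = 0" using z z' unfolding c0_def c0'_def by auto
    ultimately have "c0 = c0'" using Suc.IH c0v c0v' c0s c0s' by blast
    then show "c = c'" using \<open>c k = c' k\<close> unfolding c0_def c0'_def by (metis fun_upd_triv fun_upd_upd)
  qed
qed

lemma fib_ge: "Suc n \<le> fib (n+2)"
proof (induction n)
  case 0 then show ?case by (simp add: numeral_2_eq_2)
next
  case (Suc n)
  have "fib (Suc n + 2) = fib (n+2) + fib (Suc n)" by (simp add: numeral_2_eq_2)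
  moreover have "fib (Suc n) \<ge> 1" using fib_neq_0_nat[of "Suc n"] by simp
  ultimately show ?case using Suc by simp
qed

lemma n_lt_fib: "n < fib (2*(n+1))"
proof -
  have "Suc n \<le> fib (n+2)" by (rule fib_ge)
  also have "\<dots> \<le> fib (2*(n+1))" by (rule fib_mono) simp
  finally show ?thesis by simp
qed

lemma cg_rep_of:
  assumes "cgv c" "c 0 = 0" "\<forall>i\<ge>K. c i = 0"
  shows "CG_rep (ev c K) c"
proof -
  have sub: "{i. c i \<noteq> 0} \<subseteq> {..<K}" using assms(3) by (auto simp: not_less[symmetric])
  then have fin: "finite {i. c i \<noteq> 0}" by (rule finite_subset) simp
  have "ev c K = (\<Sum>i\<in>{i. c i \<noteq> 0}. c i * fib (2 * i))"
    unfolding ev_def by (rule sum.mono_neutral_right) (use sub in auto)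
  then show ?thesis using assms fin unfolding CG_rep_def cgv_def by auto
qed

lemma cg_rep_to:
  assumes "CG_rep n c"
  shows "\<exists>K\<ge>1. cgv c \<and> c 0 = 0 \<and> (\<forall>i\<ge>K. c i = 0) \<and> ev c K = n"
proof -
  have fin: "finite {i. c i \<noteq> 0}" using assms unfolding CG_rep_def by blast
  then obtain K0 where K0: "\<forall>i\<in>{i. c i \<noteq> 0}. i < K0" using finite_nat_set_iff_bounded by blast
  define K where "K = Suc K0"
  have spK: "\<forall>i\<ge>K. c i = 0" using K0 unfolding K_def by (meson Suc_leD leD mem_Collect_eq)
  have sub: "{i. c i \<noteq> 0} \<subseteq> {..<K}" using spK by (auto simp: not_less[symmetric])
  have "ev c K = (\<Sum>i\<in>{i. c i \<noteq> 0}. c i * fib (2 * i))"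
    unfolding ev_def by (rule sum.mono_neutral_right) (use sub in auto)
  then show ?thesis using assms spK unfolding CG_rep_def cgv_def K_def by (intro exI[of _ "Suc K0"]) auto
qed

lemma cg_exists: "\<exists>c. CG_rep n c"
proof -
  obtain c where "cgv c" "c 0 = 0" "\<forall>i\<ge>n+1. c i = 0" "ev c (n+1) = n"
    using cg_exists_aux[of "n+1"] n_lt_fib[of n] by auto
  then show ?thesis using cg_rep_of by metis
qed

lemma cg_unique: assumes "CG_rep n c" "CG_rep n c'" shows "c = c'"
proof -
  obtain K where K: "K \<ge> 1" "cgv c" "c 0 = 0" "\<forall>i\<ge>K. c i = 0" "ev c K = n" using cg_rep_to[OF assms(1)] by blast
  obtain K' where K': "K' \<ge> 1" "cgv c'" "c' 0 = 0" "\<forall>i\<ge>K'. c' i = 0" "ev c' K' = n" using cg_rep_to[OF assms(2)] by blast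
  define M where "M = max K K'"
  have "\<forall>i\<ge>M. c i = 0" "\<forall>i\<ge>M. c' i = 0" using K K' unfolding M_def by auto
  moreover have "ev c M = n" "ev c' M = n" using ev_extend[OF K(4), of M] ev_extend[OF K'(4), of M] K K' unfolding M_def by auto
  moreover have "M \<ge> 1" using K unfolding M_def by simp
  ultimately show ?thesis using cg_unique_aux[of M] K K' by auto
qed

lemma CG_decomp_eq: "CG_rep n c \<Longrightarrow> CG_decomp n = c"
  unfolding CG_decomp_def using cg_unique by (rule the_equality[rotated]) blast

definition oA :: "(nat \<Rightarrow> nat) \<Rightarrow> nat \<Rightarrow> nat" where
  "oA d T = (\<Sum>t<T. d t * fib (2*t+1))"
definition oB :: "(nat \<Rightarrow> nat) \<Rightarrow> nat \<Rightarrow> nat" where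
  "oB d T = (\<Sum>t<T. d t * fib (2*t))"
definition sh :: "(nat \<Rightarrow> nat) \<Rightarrow> nat \<Rightarrow> nat \<Rightarrow> nat" where
  "sh d k i = (if k \<le> i then d (i - k) else 0)"

lemma ev_sh: assumes "k \<ge> 1" shows "ev (sh d k) (k+T) = oA d T * fib (2*k) + oB d T * fib (2*k-1)"
proof (induction T)
  case 0
  then show ?case by (simp add: ev_def oA_def oB_def sh_def)
next
  case (Suc T)
  have f: "fib (2*(k+T)) = fib (2*k) * fib (2*T+1) + fib (2*k-1) * fib (2*T)"
  proof -
    have "2*(k+T) = Suc (2*T + (2*k-1))" using assms by simp
    then have "fib (2*(k+T)) = fib (Suc (2*k-1)) * fib (Suc (2*T)) + fib (2*k-1) * fib (2*T)"
      using fib_add[of "2*T" "2*k-1"] by (simp only:)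
    moreover have "Suc (2*k-1) = 2*k" using assms by simp
    ultimately show ?thesis by simp
  qed
  have "ev (sh d k) (k + Suc T) = ev (sh d k) (k+T) + d T * fib (2*(k+T))"
    by (simp add: ev_def sh_def)
  also have "\<dots> = oA d (Suc T) * fib (2*k) + oB d (Suc T) * fib (2*k-1)"
    using Suc f by (simp add: oA_def oB_def algebra_simps)
  finally show ?case .
qed

lemma oAB_rec:
  "oA d (Suc T) = d 0 + 2 * oA (\<lambda>t. d (Suc t)) T + oB (\<lambda>t. d (Suc t)) T"
  "oB d (Suc T) = oA (\<lambda>t. d (Suc t)) T + oB (\<lambda>t. d (Suc t)) T"
proof -
  have e1: "\<And>t. d (Suc t) * fib (2 * Suc t + 1) = 2 * (d (Suc t) * fib (2*t+1)) + d (Suc t) * fib (2*t)"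
  proof -
    fix t
    have "fib (2 * Suc t + 1) = fib (Suc (Suc (Suc (2*t))))" by simp
    also have "\<dots> = 2 * fib (2*t+1) + fib (2*t)" by simp
    finally show "d (Suc t) * fib (2 * Suc t + 1) = 2 * (d (Suc t) * fib (2*t+1)) + d (Suc t) * fib (2*t)"
      by (simp add: algebra_simps)
  qed
  have e2: "\<And>t. d (Suc t) * fib (2 * Suc t) = d (Suc t) * fib (2*t+1) + d (Suc t) * fib (2*t)"
  proof -
    fix t
    have "fib (2 * Suc t) = fib (Suc (Suc (2*t)))" by simp
    also have "\<dots> = fib (2*t+1) + fib (2*t)" by simp
    finally show "d (Suc t) * fib (2 * Suc t) = d (Suc t) * fib (2*t+1) + d (Suc t) * fib (2*t)"
      by (simp add: algebra_simps)
  qed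
  show "oA d (Suc T) = d 0 + 2 * oA (\<lambda>t. d (Suc t)) T + oB (\<lambda>t. d (Suc t)) T"
    unfolding oA_def oB_def sum.lessThan_Suc_shift
    by (simp only: e1 sum.distrib sum_distrib_left) simp
  show "oB d (Suc T) = oA (\<lambda>t. d (Suc t)) T + oB (\<lambda>t. d (Suc t)) T"
    unfolding oA_def oB_def sum.lessThan_Suc_shift
    by (simp only: e2 sum.distrib) simp
qed

lemma phi_sq: "phi^2 = phi + 1"
proof -
  have "(sqrt 5)^2 = 5" by simp
  then show ?thesis unfolding phi_def by (simp add: power2_eq_square field_simps)
qed

lemma phi_bounds: "1 < phi" "phi < 2"
proof -
  have "2 < sqrt 5" by (rule real_less_rsqrt) simp
  moreover have "sqrt 5 < 3" by (rule real_sqrt_less_iff[THEN iffD2, of 5 9, simplified]) 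
  ultimately show "1 < phi" "phi < 2" unfolding phi_def by auto
qed

definition Vf :: "(nat \<Rightarrow> nat) \<Rightarrow> nat \<Rightarrow> real" where
  "Vf d T = real (oA d T) - phi * real (oB d T)"

lemma phi_phi: "phi * (phi * x) = x + phi * x"
proof -
  have "phi * (phi * x) = phi^2 * x" by (simp add: power2_eq_square)
  then show ?thesis using phi_sq by (simp add: algebra_simps)
qed

lemma Vf_rec: "Vf d (Suc T) = real (d 0) + (2 - phi) * Vf (\<lambda>t. d (Suc t)) T"
proof -
  have "Vf d (Suc T) = real (d 0) + 2 * real (oA (\<lambda>t. d (Suc t)) T) + real (oB (\<lambda>t. d (Suc t)) T)
      - phi * (real (oA (\<lambda>t. d (Suc t)) T) + real (oB (\<lambda>t. d (Suc t)) T))"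
    unfolding Vf_def oAB_rec by simp
  also have "\<dots> = real (d 0) + (2 - phi) * Vf (\<lambda>t. d (Suc t)) T"
    unfolding Vf_def by (simp add: algebra_simps phi_phi)
  finally show ?thesis .
qed

lemma Vf_zero: "Vf d 0 = 0" by (simp add: Vf_def oA_def oB_def)

lemma cgv_shift: assumes "cgv d" shows "cgv (\<lambda>t. d (t + k))"
  unfolding cgv_def
proof (intro conjI allI impI)
  fix i show "d (i + k) \<le> 2" using assms unfolding cgv_def by simp
next
  fix i j assume "i < j" "d (i+k) = 2" "d (j+k) = 2"
  then obtain w where w: "i + k < w" "w < j + k" "d w = 0" using assms unfolding cgv_def
    by (meson add_less_mono1)
  then show "\<exists>w. i < w \<and> w < j \<and> d (w + k) = 0"
    by (intro exI[of _ "w - k"]) auto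
qed

definition lowc :: "(nat \<Rightarrow> nat) \<Rightarrow> bool" where
  "lowc d \<longleftrightarrow> (\<forall>i. d i = 2 \<longrightarrow> (\<exists>j<i. d j = 0))"

lemma Vf_bounds:
  "\<forall>d. cgv d \<longrightarrow> (\<forall>i\<ge>T. d i = 0) \<longrightarrow>
     real (d 0) \<le> Vf d T \<and> Vf d T < phi^2 \<and> (lowc d \<longrightarrow> Vf d T < phi) \<and> ((\<exists>i. d i \<noteq> 0) \<longrightarrow> 0 < Vf d T)"
proof (induction T)
  case 0
  show ?case using phi_bounds phi_sq by (auto simp: Vf_zero)
next
  case (Suc T)
  show ?case
  proof (intro allI impI)
    fix d assume cv: "cgv d" and sp: "\<forall>i\<ge>Suc T. d i = 0"
    define d' where "d' = (\<lambda>t. d (Suc t))"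
    have cv': "cgv d'" using cgv_shift[OF cv, of 1] unfolding d'_def by simp
    have sp': "\<forall>i\<ge>T. d' i = 0" using sp unfolding d'_def by simp
    have IH0: "real (d' 0) \<le> Vf d' T" using Suc.IH cv' sp' by blast
    have IH: "0 \<le> Vf d' T" "Vf d' T < phi^2" "lowc d' \<Longrightarrow> Vf d' T < phi" "(\<exists>i. d' i \<noteq> 0) \<Longrightarrow> 0 < Vf d' T"
      using Suc.IH cv' sp' order_trans[OF of_nat_0_le_iff IH0] by auto
    have rec: "Vf d (Suc T) = real (d 0) + (2 - phi) * Vf d' T" unfolding d'_def by (rule Vf_rec)
    have q: "0 < 2 - phi" using phi_bounds by simp
    have qphi2: "(2 - phi) * phi^2 = 1" using phi_sq by (simp add: algebra_simps power2_eq_square)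
    have qphi: "(2 - phi) * phi = phi - 1" using phi_sq by (simp add: algebra_simps power2_eq_square)
    have lo: "0 \<le> (2 - phi) * Vf d' T" using q IH(1) by simp
    have hi: "(2 - phi) * Vf d' T < 1" using mult_strict_left_mono[OF IH(2) q] qphi2 by simp
    have hi2: "lowc d' \<Longrightarrow> (2 - phi) * Vf d' T < phi - 1" using mult_strict_left_mono[OF IH(3) q] qphi by simp
    have pos: "(\<exists>i. d' i \<noteq> 0) \<Longrightarrow> 0 < (2 - phi) * Vf d' T" using IH(4) q by simp
    have d0: "d 0 \<le> 2" using cv unfolding cgv_def by simp
    have nz: "(\<exists>i. d i \<noteq> 0) \<Longrightarrow> 0 < Vf d (Suc T)"
    proof -
      assume "\<exists>i. d i \<noteq> 0"
      then obtain i where i: "d i \<noteq> 0" by blast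
      show ?thesis
      proof (cases "d 0 = 0")
        case True
        then obtain i' where "i = Suc i'" using i by (cases i) auto
        then have "d' i' \<noteq> 0" using i unfolding d'_def by simp
        then show ?thesis using pos rec True by auto
      next
        case False then show ?thesis using rec lo by simp
      qed
    qed
    consider "d 0 = 0" | "d 0 = 1" | "d 0 = 2" using d0 by linarith
    then show "real (d 0) \<le> Vf d (Suc T) \<and> Vf d (Suc T) < phi^2 \<and> (lowc d \<longrightarrow> Vf d (Suc T) < phi) \<and>
        ((\<exists>i. d i \<noteq> 0) \<longrightarrow> 0 < Vf d (Suc T))"
    proof cases
      case 1
      then show ?thesis using rec lo hi nz phi_bounds phi_sq by auto
    next
      case 2
      have "lowc d \<Longrightarrow> lowc d'"
        unfolding lowc_def
      proof (intro allI impI)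
        fix i assume lc: "\<forall>i. d i = 2 \<longrightarrow> (\<exists>j<i. d j = 0)" and "d' i = 2"
        then obtain j where j: "j < Suc i" "d j = 0" unfolding d'_def by blast
        then obtain j' where "j = Suc j'" using 2 by (cases j) auto
        then show "\<exists>j<i. d' j = 0" using j unfolding d'_def by auto
      qed
      then show ?thesis using rec lo hi hi2 nz phi_bounds phi_sq 2 by auto
    next
      case 3
      have lc': "lowc d'"
        unfolding lowc_def
      proof (intro allI impI)
        fix i assume "d' i = 2"
        then have "d (Suc i) = 2" unfolding d'_def by simp
        then obtain w where w: "0 < w" "w < Suc i" "d w = 0" using cv 3 unfolding cgv_def by blast
        then obtain w' where "w = Suc w'" by (cases w) auto
        then show "\<exists>j<i. d' j = 0" using w unfolding d'_def by auto
      qed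
      have "\<not> lowc d" unfolding lowc_def using 3 by auto
      then show ?thesis using rec lo hi2[OF lc'] nz phi_bounds phi_sq 3 by auto
    qed
  qed
qed

lemma pair_form:
  assumes cv: "cgv d" and sp: "\<forall>i\<ge>T. d i = 0" and d0: "d 0 \<ge> 1"
  shows "(oA d T = 1 \<and> oB d T = 0) \<or> (\<exists>m. oA d T = m+2 \<and> oB d T = nat \<lfloor>real (m + 1) / phi\<rfloor>)"
proof -
  obtain T' where T: "T = Suc T'" using sp d0 by (cases T) auto
  define d' where "d' = (\<lambda>t. d (Suc t))"
  have cv': "cgv d'" using cgv_shift[OF cv, of 1] unfolding d'_def by simp
  have sp': "\<forall>i\<ge>T'. d' i = 0" using sp T unfolding d'_def by simp
  have rA: "oA d T = d 0 + 2 * oA d' T' + oB d' T'" "oB d T = oA d' T' + oB d' T'"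
    unfolding T d'_def by (rule oAB_rec)+
  have rV: "Vf d T = real (d 0) + (2 - phi) * Vf d' T'" unfolding T d'_def by (rule Vf_rec)
  have B': "real (d' 0) \<le> Vf d' T'" "(\<exists>i. d' i \<noteq> 0) \<Longrightarrow> 0 < Vf d' T'" using Vf_bounds[of T'] cv' sp' by auto
  have Bd: "Vf d T < phi^2" using Vf_bounds[of T] cv sp by auto
  have q: "0 < 2 - phi" using phi_bounds by simp
  have d02: "d 0 \<le> 2" using cv unfolding cgv_def by simp
  show ?thesis
  proof (cases "d 0 = 1 \<and> (\<forall>i. d' i = 0)")
    case True
    then have "oA d' T' = 0" "oB d' T' = 0" unfolding oA_def oB_def by auto
    then show ?thesis using rA True by simp
  next
    case False
    have "1 < Vf d T"
    proof (cases "d 0 = 2")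
      case True
      have "0 \<le> Vf d' T'" using order_trans[OF of_nat_0_le_iff B'(1)] .
      then show ?thesis using rV True q by (simp add: add_pos_nonneg)
    next
      case F2: False
      then have "d 0 = 1" using d0 d02 by simp
      then have "\<exists>i. d' i \<noteq> 0" using False by simp
      then show ?thesis using rV B'(2) q \<open>d 0 = 1\<close> by simp
    qed
    define A where "A = oA d T"
    define B where "B = oB d T"
    have V: "1 < real A - phi * real B" "real A - phi * real B < phi + 1"
      using \<open>1 < Vf d T\<close> Bd phi_sq unfolding Vf_def A_def B_def by auto
    have "0 \<le> phi * real B" using phi_bounds by simp
    then have "A \<ge> 2" using V(1) by linarith
    have ph: "0 < phi" using phi_bounds by simp
    have "real (A - 2 + 1) = real A - 1" using \<open>A \<ge> 2\<close> by simp
    moreover have "\<lfloor>(real A - 1) / phi\<rfloor> = int B"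
    proof (rule floor_unique)
      show "real_of_int (int B) \<le> (real A - 1) / phi"
        using V(1) ph by (simp add: pos_le_divide_eq algebra_simps)
      show "(real A - 1) / phi < real_of_int (int B) + 1"
        using V(2) ph by (simp add: pos_divide_less_eq algebra_simps)
    qed
    ultimately have "oB d T = nat \<lfloor>real (A - 2 + 1) / phi\<rfloor>" unfolding B_def by simp
    moreover have "oA d T = (A - 2) + 2" using \<open>A \<ge> 2\<close> unfolding A_def by simp
    ultimately show ?thesis by blast
  qed
qed

lemma oA_upd: "\<forall>i\<ge>k. d i = 0 \<Longrightarrow> oA (d(k:=x)) (Suc k) = oA d k + x * fib (2*k+1)"
  unfolding oA_def by simp

lemma surj_aux:
  assumes "T \<ge> 1"
  shows "\<forall>a. (1 \<le> a \<and> a \<le> fib (2*T+1) \<longrightarrow> (\<exists>d. cgv d \<and> 1 \<le> d 0 \<and> (\<forall>i\<ge>T. d i = 0) \<and> oA d T = a)) \<and>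
             (1 \<le> a \<and> a \<le> fib (2*T) \<longrightarrow> (\<exists>d. cgv d \<and> 1 \<le> d 0 \<and> (\<forall>i\<ge>T. d i = 0) \<and> oA d T = a \<and> topc d T))"
  using assms
proof (induction T rule: nat_induct_at_least)
  case base
  have f3: "fib 3 = 2" by (simp add: numeral_3_eq_3 numeral_2_eq_2)
  have f2: "fib 2 = 1" by (simp add: numeral_2_eq_2)
  show ?case
  proof (intro allI conjI impI)
    fix a :: nat assume a: "1 \<le> a \<and> a \<le> fib (2*1+1)"
    define d where "d = (\<lambda>i::nat. if i = 0 then a else 0)"
    have "cgv d" unfolding cgv_def d_def using a f3 by auto
    moreover have "oA d 1 = a" unfolding oA_def d_def by simp
    ultimately show "\<exists>d. cgv d \<and> 1 \<le> d 0 \<and> (\<forall>i\<ge>1. d i = 0) \<and> oA d 1 = a"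
      using a unfolding d_def by (intro exI[of _ d]) (auto simp: d_def)
  next
    fix a :: nat assume a: "1 \<le> a \<and> a \<le> fib (2*1)"
    then have a1: "a = 1" using f2 by simp
    define d where "d = (\<lambda>i::nat. if i = 0 then 1::nat else 0)"
    have "cgv d" unfolding cgv_def d_def by auto
    moreover have "oA d 1 = a" unfolding oA_def d_def using a1 by simp
    moreover have "topc d 1" unfolding topc_def d_def by simp
    ultimately show "\<exists>d. cgv d \<and> 1 \<le> d 0 \<and> (\<forall>i\<ge>1. d i = 0) \<and> oA d 1 = a \<and> topc d 1"
      by (intro exI[of _ d]) (auto simp: d_def)
  qed
next
  case (Suc T)
  have T1: "T \<ge> 1" by fact
  have F1: "fib (2 * Suc T + 1) = 2 * fib (2*T+1) + fib (2*T)"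
  proof -
    have "fib (2 * Suc T + 1) = fib (Suc (Suc (Suc (2*T))))" by simp
    also have "\<dots> = 2 * fib (2*T+1) + fib (2*T)" by simp
    finally show ?thesis .
  qed
  have F2: "fib (2 * Suc T) = fib (2*T+1) + fib (2*T)"
  proof -
    have "fib (2 * Suc T) = fib (Suc (Suc (2*T)))" by simp
    also have "\<dots> = fib (2*T+1) + fib (2*T)" by simp
    finally show ?thesis .
  qed
  have oAext: "\<And>d. \<forall>i\<ge>T. d i = 0 \<Longrightarrow> oA d (Suc T) = oA d T" unfolding oA_def by simp
  show ?case
  proof (intro allI conjI impI)
    fix a assume a: "1 \<le> a \<and> a \<le> fib (2 * Suc T + 1)"
    show "\<exists>d. cgv d \<and> 1 \<le> d 0 \<and> (\<forall>i\<ge>Suc T. d i = 0) \<and> oA d (Suc T) = a"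
    proof (cases "a \<le> fib (2*T+1)")
      case True
      then obtain d where d: "cgv d" "1 \<le> d 0" "\<forall>i\<ge>T. d i = 0" "oA d T = a" using Suc.IH a by blast
      then show ?thesis using oAext[OF d(3)] by (intro exI[of _ d]) auto
    next
      case False
      show ?thesis
      proof (cases "a \<le> 2 * fib (2*T+1)")
        case True
        then have "1 \<le> a - fib (2*T+1) \<and> a - fib (2*T+1) \<le> fib (2*T+1)" using False by linarith
        then obtain d where d: "cgv d" "1 \<le> d 0" "\<forall>i\<ge>T. d i = 0" "oA d T = a - fib (2*T+1)" using Suc.IH by blast
        show ?thesis
          apply (intro exI[of _ "d(T:=1)"])
          using d upd1_cgv[OF d(1) d(3)] oA_upd[OF d(3), of 1] T1 False by auto
      next
        case False2: False
        then have "1 \<le> a - 2 * fib (2*T+1) \<and> a - 2 * fib (2*T+1) \<le> fib (2*T)" using a F1 False2 by linarith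
        then obtain d where d: "cgv d" "1 \<le> d 0" "\<forall>i\<ge>T. d i = 0" "oA d T = a - 2 * fib (2*T+1)" "topc d T"
          using Suc.IH by blast
        show ?thesis
          apply (intro exI[of _ "d(T:=2)"])
          using d upd2_cgv[OF d(1) d(3) d(5)] oA_upd[OF d(3), of 2] T1 False2 by auto
      qed
    qed
  next
    fix a assume a: "1 \<le> a \<and> a \<le> fib (2 * Suc T)"
    show "\<exists>d. cgv d \<and> 1 \<le> d 0 \<and> (\<forall>i\<ge>Suc T. d i = 0) \<and> oA d (Suc T) = a \<and> topc d (Suc T)"
    proof (cases "a \<le> fib (2*T+1)")
      case True
      then obtain d where d: "cgv d" "1 \<le> d 0" "\<forall>i\<ge>T. d i = 0" "oA d T = a" using Suc.IH a by blast
      then show ?thesis using oAext[OF d(3)] topc_zero[OF d(3)] by (intro exI[of _ d]) auto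
    next
      case False
      then have "1 \<le> a - fib (2*T+1) \<and> a - fib (2*T+1) \<le> fib (2*T)" using a F2 False by linarith
      then obtain d where d: "cgv d" "1 \<le> d 0" "\<forall>i\<ge>T. d i = 0" "oA d T = a - fib (2*T+1)" "topc d T"
        using Suc.IH by blast
      show ?thesis
        apply (intro exI[of _ "d(T:=1)"])
        using d upd1_cgv[OF d(1) d(3)] oA_upd[OF d(3), of 1] T1 False topc_upd1[OF d(5)] by auto
    qed
  qed
qed

lemma comb:
  assumes cj: "cgv cj" "cj 0 = 0" "\<forall>i\<ge>N. cj i = 0" and dd: "cgv d" "\<forall>i\<ge>T. d i = 0"
    and Nk: "N < k"
  defines "c \<equiv> (\<lambda>i. cj i + sh d k i)"
  shows "CG_rep (ev cj N + oA d T * fib (2*k) + oB d T * fib (2*k-1)) c \<and> c N = 0"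
proof -
  have k1: "k \<ge> 1" using Nk by simp
  have c0: "c 0 = 0" using cj(2) k1 unfolding c_def sh_def by simp
  have cN: "c N = 0" using cj(3) Nk unfolding c_def sh_def by simp
  have spc: "\<forall>i\<ge>k+T. c i = 0" using cj(3) dd(2) Nk unfolding c_def sh_def by auto
  have low: "\<And>i. i < k \<Longrightarrow> c i = cj i" unfolding c_def sh_def by simp
  have high: "\<And>i. k \<le> i \<Longrightarrow> c i = d (i - k)" using cj(3) Nk unfolding c_def sh_def by simp
  have cv: "cgv c"
    unfolding cgv_def
  proof (intro conjI allI impI)
    fix i show "c i \<le> 2"
      using cj(1) dd(1) low high unfolding cgv_def by (cases "i < k") auto
  next
    fix i j assume ij: "i < j" and a: "c i = 2" and b: "c j = 2"
    show "\<exists>w. i < w \<and> w < j \<and> c w = 0"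
    proof (cases "j < k")
      case True
      then have "cj i = 2" "cj j = 2" using a b low ij by auto
      then obtain w where "i < w" "w < j" "cj w = 0" using cj(1) ij unfolding cgv_def by blast
      then show ?thesis using low True by (intro exI[of _ w]) auto
    next
      case False
      show ?thesis
      proof (cases "i < k")
        case True
        then have "cj i = 2" using a low by simp
        then have "i < N" using cj(3) by (metis not_less zero_neq_numeral)
        then show ?thesis using cN Nk False by (intro exI[of _ N]) auto
      next
        case F2: False
        then have "d (i - k) = 2" "d (j - k) = 2" using a b high False by auto
        moreover have "i - k < j - k" using ij F2 by simp
        ultimately obtain w where w: "i - k < w" "w < j - k" "d w = 0" using dd(1) unfolding cgv_def by blast
        then show ?thesis using high[of "w + k"] F2 by (intro exI[of _ "w + k"]) auto
      qed
    qed
  qed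
  have e1: "ev c (k+T) = ev cj (k+T) + ev (sh d k) (k+T)" unfolding ev_def c_def by (simp add: sum.distrib distrib_right)
  have e2: "ev cj (k+T) = ev cj N" using ev_extend[OF cj(3), of "k+T"] Nk by simp
  have e3: "ev (sh d k) (k+T) = oA d T * fib (2*k) + oB d T * fib (2*k-1)" using ev_sh[OF k1] .
  have "ev c (k+T) = ev cj N + oA d T * fib (2*k) + oB d T * fib (2*k-1)" using e1 e2 e3 by simp
  then show ?thesis using cg_rep_of[OF cv c0 spc] cN by simp
qed

lemma decomp_rep: "CG_rep n (CG_decomp n)"
  using cg_exists[of n] CG_decomp_eq by metis

theorem theorem1p3:
  fixes N :: nat
  assumes "N \<ge> 1"
  shows "{n::nat. n > 0 \<and> CG_decomp n N = 0} =
    {1..fib (2*N) - 1} \<union>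
    (\<Union>k\<in>{N+1..}.
       {j + fib (2*k) | j. j \<le> fib (2*N) - 1} \<union>
       {j + (m + 2) * fib (2*k) + nat \<lfloor>real (m + 1) / phi\<rfloor> * fib (2*k - 1)
          | j m. j \<le> fib (2*N) - 1})"
  (is "?L = ?R")
proof (intro set_eqI iffI)
  have fN: "fib (2*N) > 0" using assms by (simp add: fib_neq_0_nat)
  fix x
  {
    assume "x \<in> ?L"
    then have x0: "x > 0" and xN: "CG_decomp x N = 0" by auto
    define c where "c = CG_decomp x"
    obtain K0 where K0: "K0 \<ge> 1" "cgv c" "c 0 = 0" "\<forall>i\<ge>K0. c i = 0" "ev c K0 = x"
      using cg_rep_to[OF decomp_rep[of x]] unfolding c_def by blast
    define K where "K = max K0 (N+1)"
    have spK: "\<forall>i\<ge>K. c i = 0" using K0 unfolding K_def by auto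
    have evK: "ev c K = x" using ev_extend[OF K0(4), of K] K0(5) unfolding K_def by simp
    have NK: "N < K" unfolding K_def by simp
    have cN: "c N = 0" using xN unfolding c_def .
    define cj where "cj = (\<lambda>i. if i < N then c i else 0)"
    define ch where "ch = (\<lambda>i. if N < i then c i else 0)"
    have csplit: "c i = cj i + ch i" for i using cN unfolding cj_def ch_def by (cases i N rule: linorder_cases) auto
    have cjv: "cgv cj" unfolding cj_def by (rule cgv_restrict[OF K0(2)])
    have chv: "cgv ch" unfolding ch_def by (rule cgv_restrict[OF K0(2)])
    have cjs: "\<forall>i\<ge>N. cj i = 0" unfolding cj_def by simp
    have jlt: "ev cj N < fib (2*N)" using cg_bound_aux[OF assms] cjv cjs by simp
    have "(\<Sum>i<K. c i * fib (2*i)) = (\<Sum>i<K. cj i * fib (2*i) + ch i * fib (2*i))"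
      by (rule sum.cong) (simp_all only: csplit distrib_right)
    then have "ev c K = ev cj K + ev ch K" unfolding ev_def by (simp only: sum.distrib)
    moreover have "ev cj K = ev cj N" using ev_extend[OF cjs, of K] NK by simp
    ultimately have xeq: "x = ev cj N + ev ch K" using evK by simp
    define j where "j = ev cj N"
    have jle: "j \<le> fib (2*N) - 1" using jlt unfolding j_def by simp
    show "x \<in> ?R"
    proof (cases "\<forall>i. ch i = 0")
      case True
      then have "ev ch K = 0" unfolding ev_def by simp
      then have "x \<in> {1..fib (2*N) - 1}" using xeq x0 jle unfolding j_def by simp
      then show ?thesis by blast
    next
      case False
      then obtain i0 where i0: "ch i0 \<noteq> 0" by blast
      define k where "k = (LEAST i. ch i \<noteq> 0)"
      have chk: "ch k \<noteq> 0" unfolding k_def using i0 by (rule LeastI)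
      have below: "\<And>i. i < k \<Longrightarrow> ch i = 0" unfolding k_def using not_less_Least by blast
      have Nk: "N < k" using chk unfolding ch_def by (simp split: if_splits)
      have kK: "k < K"
      proof (rule ccontr)
        assume "\<not> k < K" then have "c k = 0" using spK by simp
        then show False using chk unfolding ch_def by (simp split: if_splits)
      qed
      define d where "d = (\<lambda>t. ch (t + k))"
      define T where "T = K - k"
      have shd: "sh d k = ch" unfolding sh_def d_def using below by (auto intro!: ext)
      have dv: "cgv d" unfolding d_def by (rule cgv_shift[OF chv])
      have ds: "\<forall>i\<ge>T. d i = 0" unfolding d_def T_def ch_def using spK by auto
      have d0: "d 0 \<ge> 1" unfolding d_def using chk by simp
      have "ev ch K = oA d T * fib (2*k) + oB d T * fib (2*k-1)"
        using ev_sh[of k d T] Nk kK shd unfolding T_def by simp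
      then have xeq2: "x = j + oA d T * fib (2*k) + oB d T * fib (2*k-1)" using xeq unfolding j_def by simp
      have kin: "k \<in> {N+1..}" using Nk by simp
      from pair_form[OF dv ds d0] show ?thesis
      proof
        assume "oA d T = 1 \<and> oB d T = 0"
        then have "x \<in> {j + fib (2*k) | j. j \<le> fib (2*N) - 1}" using xeq2 jle by auto
        then show ?thesis using kin by blast
      next
        assume "\<exists>m. oA d T = m+2 \<and> oB d T = nat \<lfloor>real (m + 1) / phi\<rfloor>"
        then obtain m where m: "oA d T = m+2" "oB d T = nat \<lfloor>real (m + 1) / phi\<rfloor>" by blast
        then have "x \<in> {j + (m + 2) * fib (2*k) + nat \<lfloor>real (m + 1) / phi\<rfloor> * fib (2*k - 1)
          | j m. j \<le> fib (2*N) - 1}" using xeq2 jle by auto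
        then show ?thesis using kin by blast
      qed
    qed
  }
  {
    assume xR: "x \<in> ?R"
    show "x \<in> ?L"
    proof (cases "x \<in> {1..fib (2*N) - 1}")
      case True
      then have "x < fib (2*N)" by auto
      then obtain c where c: "cgv c" "c 0 = 0" "\<forall>i\<ge>N. c i = 0" "ev c N = x"
        using cg_exists_aux[OF assms] by blast
      have "CG_decomp x = c" using cg_rep_of[OF c(1-3)] c(4) CG_decomp_eq by simp
      then show ?thesis using c(3) True by auto
    next
      case False
      then obtain k where kin: "k \<ge> N+1" and
        xk: "x \<in> {j + fib (2*k) | j. j \<le> fib (2*N) - 1} \<union>
          {j + (m + 2) * fib (2*k) + nat \<lfloor>real (m + 1) / phi\<rfloor> * fib (2*k - 1) | j m. j \<le> fib (2*N) - 1}"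
        using xR by auto
      have fk: "fib (2*k) > 0" using kin by (simp add: fib_neq_0_nat)
      have Nk: "N < k" using kin by simp
      have lowrep: "\<And>j. j \<le> fib (2*N) - 1 \<Longrightarrow> \<exists>c. cgv c \<and> c 0 = 0 \<and> (\<forall>i\<ge>N. c i = 0) \<and> ev c N = j"
      proof -
        fix j assume "j \<le> fib (2*N) - 1"
        then have "j < fib (2*N)" using fN by linarith
        then show "\<exists>c. cgv c \<and> c 0 = 0 \<and> (\<forall>i\<ge>N. c i = 0) \<and> ev c N = j" using cg_exists_aux[OF assms] by blast
      qed
      from xk show ?thesis
      proof
        assume "x \<in> {j + fib (2*k) | j. j \<le> fib (2*N) - 1}"
        then obtain j where j: "x = j + fib (2*k)" "j \<le> fib (2*N) - 1" by blast
        obtain cj where cj: "cgv cj" "cj 0 = 0" "\<forall>i\<ge>N. cj i = 0" "ev cj N = j" using lowrep[OF j(2)] by blast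
        define d where "d = (\<lambda>i::nat. if i = 0 then 1::nat else 0)"
        have dv: "cgv d" unfolding cgv_def d_def by auto
        have ds: "\<forall>i\<ge>1. d i = 0" unfolding d_def by auto
        have "oA d 1 = 1" "oB d 1 = 0" unfolding oA_def oB_def d_def by auto
        then have "CG_rep x (\<lambda>i. cj i + sh d k i) \<and> (\<lambda>i. cj i + sh d k i) N = 0"
          using comb[OF cj(1-3) dv ds Nk] j cj(4) by simp
        then show ?thesis using CG_decomp_eq j fk by auto
      next
        assume "x \<in> {j + (m + 2) * fib (2*k) + nat \<lfloor>real (m + 1) / phi\<rfloor> * fib (2*k - 1) | j m. j \<le> fib (2*N) - 1}"
        then obtain j m where j: "x = j + (m + 2) * fib (2*k) + nat \<lfloor>real (m + 1) / phi\<rfloor> * fib (2*k - 1)"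
          "j \<le> fib (2*N) - 1" by blast
        obtain cj where cj: "cgv cj" "cj 0 = 0" "\<forall>i\<ge>N. cj i = 0" "ev cj N = j" using lowrep[OF j(2)] by blast
        have "m + 2 \<le> fib (2*(m+2)+1)"
        proof -
          have "Suc (m+2) \<le> fib (m+2+2)" by (rule fib_ge)
          also have "\<dots> \<le> fib (2*(m+2)+1)" by (rule fib_mono) simp
          finally show ?thesis by simp
        qed
        then have H: "1 \<le> m + 2 \<and> m + 2 \<le> fib (2*(m+2)+1)" by simp
        have T1: "(1::nat) \<le> m + 2" by simp
        note S = spec[OF surj_aux[OF T1], of "m+2"]
        obtain d where d: "cgv d" "1 \<le> d 0" "\<forall>i\<ge>m+2. d i = 0" "oA d (m+2) = m + 2"
          using mp[OF conjunct1[OF S] H] by blast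
        have "oB d (m+2) = nat \<lfloor>real (m + 1) / phi\<rfloor>"
          using pair_form[OF d(1) d(3) d(2)] d(4) by auto
        then have "CG_rep x (\<lambda>i. cj i + sh d k i) \<and> (\<lambda>i. cj i + sh d k i) N = 0"
          using comb[OF cj(1-3) d(1) d(3) Nk] j cj(4) d(4) by simp
        then show ?thesis using CG_decomp_eq j fk by auto
      qed
    qed
  }
qed

end
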